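(* If a PPT three-mode CM $\gamma$ is fully separable, then $$\mathrm{tr}\,N\ge2,\quad \mathrm{tr}\,\tilde N\ge2,\quad \det N>0,\quad \det\tilde N>0.$$
   Context: Conventions: Three modes $A,B,C$, phase-space vectors ordered mode-wise as $(q_A,p_A,q_B,p_B,q_C,p_C)$. $J_1=\begin{pmatrix}0&-1\\1&0\end{pmatrix}$, $J=J_1\oplus J_1\oplus J_1$. A CM of $n$ modes is a real symmetric $2n\times2n$ matrix $\gamma>0$ with $\gamma-iJ\ge0$. $X\ge Y$ means $X-Y$ is positive semidefinite. For $x\in\{A,B,C\}$, $\tilde J_x$ is $J$ with the $2\times2$ diagonal block of mode $x$ replaced by $-J_1$, and $\tilde J_0=J$. A three-mode CM $\gamma$ is called PPT if $\gamma\ge i\tilde J_x$ for all $x\in\{0,A,B,C\}$, and fully separable if there exist one-mode CMs $\gamma_A,\gamma_B,\gamma_C$ with $\gamma\ge\gamma_A\oplus\gamma_B\oplus\gamma_C$. Write $\gamma=\begin{pmatrix}A&C\\C^T&B\end{pmatrix}$ with $A$ the $2\times2$ block of mode $A$, $B$ the $4\times4$ block of modes $B,C$, $C$ the $2\times4$ off-diagonal block; let $J_{BC}=J_1\oplus J_1$, $\tilde J_{BC}=J_1\oplus(-J_1)$, and define the (Hermitian, possibly complex) $2\times2$ matrices $$N=A-C(B-iJ_{BC})^{-1}C^T,\qquad \tilde N=A-C(B-i\tilde J_{BC})^{-1}C^T,$$ where the inverses are Moore–Penrose pseudoinverses (inversion on the range); these are well defined because $\ker(B-iJ_{BC}),\ker(B-i\tilde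 J_{BC})\subseteq\ker C$ for PPT $\gamma$. *)

theory Defs
  imports "Jordan_Normal_Form.Determinant"
begin

(* Symplectic-type form for n modes, with the 2x2 block of every mode in S
   replaced by -J1.  J1 = [[0,-1],[1,0]]; ordering (q_1,p_1,...,q_n,p_n). *)
definition J1entry :: "nat \<Rightarrow> nat \<Rightarrow> complex" where
  "J1entry i j = (if i = 0 \<and> j = 1 then -1 else if i = 1 \<and> j = 0 then 1 else 0)"

definition Jflip :: "nat \<Rightarrow> nat set \<Rightarrow> complex mat" where
  "Jflip n S = mat (2*n) (2*n) (\<lambda>(i,j).
      if i div 2 = j div 2
      then (if i div 2 \<in> S then -1 else 1) * J1entry (i mod 2) (j mod 2)
      else 0)"

abbreviation Jsym :: "nat \<Rightarrow> complex mat" where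
  "Jsym n \<equiv> Jflip n {}"

abbreviation cmat :: "real mat \<Rightarrow> complex mat" where
  "cmat M \<equiv> map_mat complex_of_real M"

definition qform :: "nat \<Rightarrow> complex mat \<Rightarrow> (nat \<Rightarrow> complex) \<Rightarrow> complex" where
  "qform n M v = (\<Sum>i<n. \<Sum>j<n. cnj (v i) * M $$ (i,j) * v j)"

definition psd :: "nat \<Rightarrow> complex mat \<Rightarrow> bool" where
  "psd n M \<longleftrightarrow> M \<in> carrier_mat n n \<and>
     (\<forall>v. qform n M v \<in> \<real> \<and> 0 \<le> Re (qform n M v))"

definition posdef_real :: "nat \<Rightarrow> real mat \<Rightarrow> bool" where
  "posdef_real n M \<longleftrightarrow> M \<in> carrier_mat n n \<and>
     (\<forall>v::nat \<Rightarrow> real. (\<exists>i<n. v i \<noteq> 0) \<longrightarrow>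
        0 < (\<Sum>i<n. \<Sum>j<n. v i * M $$ (i,j) * v j))"

definition CM :: "nat \<Rightarrow> real mat \<Rightarrow> bool" where
  "CM n \<gamma> \<longleftrightarrow> \<gamma> \<in> carrier_mat (2*n) (2*n) \<and> transpose_mat \<gamma> = \<gamma> \<and>
     posdef_real (2*n) \<gamma> \<and> psd (2*n) (cmat \<gamma> - \<i> \<cdot>\<^sub>m Jsym n)"

(* modes A,B,C are indexed 0,1,2; \tilde J_0 = Jflip 3 {}, \tilde J_A = Jflip 3 {0}, ... *)
definition PPT3 :: "real mat \<Rightarrow> bool" where
  "PPT3 \<gamma> \<longleftrightarrow> CM 3 \<gamma> \<and>
     (\<forall>S \<in> {{}, {0}, {1}, {2}}. psd 6 (cmat \<gamma> - \<i> \<cdot>\<^sub>m Jflip 3 S))"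

definition dsum3 :: "real mat \<Rightarrow> real mat \<Rightarrow> real mat \<Rightarrow> real mat" where
  "dsum3 a b c = four_block_mat a (0\<^sub>m 2 4) (0\<^sub>m 4 2)
                   (four_block_mat b (0\<^sub>m 2 2) (0\<^sub>m 2 2) c)"

definition fully_separable3 :: "real mat \<Rightarrow> bool" where
  "fully_separable3 \<gamma> \<longleftrightarrow> (\<exists>gA gB gC. CM 1 gA \<and> CM 1 gB \<and> CM 1 gC \<and>
      psd 6 (cmat (\<gamma> - dsum3 gA gB gC)))"

definition adj :: "complex mat \<Rightarrow> complex mat" where
  "adj M = transpose_mat (map_mat cnj M)"

definition pinv :: "nat \<Rightarrow> complex mat \<Rightarrow> complex mat" where
  "pinv n M = (THE X. X \<in> carrier_mat n n \<and> M * X * M = M \<and> X * M * X = X \<and>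
                     adj (M * X) = M * X \<and> adj (X * M) = X * M)"

(* blocks of a 6x6 gamma: A (mode A), B (modes B,C), C (off-diagonal) *)
definition blkA :: "real mat \<Rightarrow> real mat" where
  "blkA \<gamma> = mat 2 2 (\<lambda>(i,j). \<gamma> $$ (i,j))"
definition blkB :: "real mat \<Rightarrow> real mat" where
  "blkB \<gamma> = mat 4 4 (\<lambda>(i,j). \<gamma> $$ (i+2,j+2))"
definition blkC :: "real mat \<Rightarrow> real mat" where
  "blkC \<gamma> = mat 2 4 (\<lambda>(i,j). \<gamma> $$ (i,j+2))"

(* N (S = {}) and \tilde N (S = {1}, i.e. \tilde J_BC = J1 \<oplus> -J1) *)
definition Nmat :: "nat set \<Rightarrow> real mat \<Rightarrow> complex mat" where
  "Nmat S \<gamma> = cmat (blkA \<gamma>) -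
     cmat (blkC \<gamma>) * pinv 4 (cmat (blkB \<gamma>) - \<i> \<cdot>\<^sub>m Jflip 2 S) * cmat (transpose_mat (blkC \<gamma>))"

definition mtrace :: "complex mat \<Rightarrow> complex" where
  "mtrace M = (\<Sum>i<dim_row M. M $$ (i,i))"

end

theory Submission
  imports Defs "Jordan_Normal_Form.Gauss_Jordan_Elimination"
begin


lemma det2: assumes "(A::complex mat) \<in> carrier_mat 2 2"
  shows "det A = A$$(0,0)*A$$(1,1) - A$$(0,1)*A$$(1,0)"
proof -
  have "det A = (\<Sum>i<2. A $$ (i,0) * cofactor A i 0)"
    by (rule laplace_expansion_column[OF assms]) simp
  also have "\<dots> = A$$(0,0) * cofactor A 0 0 + A$$(1,0) * cofactor A 1 0"
    by (simp add: numeral_2_eq_2)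
  also have "cofactor A 0 0 = A$$(1,1)"
    unfolding cofactor_def using assms
    by (subst det_single[of _]) (auto simp: mat_delete_def)
  also have "cofactor A 1 0 = - A$$(0,1)"
    unfolding cofactor_def using assms
    by (subst det_single[of _]) (auto simp: mat_delete_def)
  finally show ?thesis by (simp add: algebra_simps)
qed

lemma adj_carrier[simp]: "adj A \<in> carrier_mat (dim_col A) (dim_row A)"
  "dim_row (adj A) = dim_col A" "dim_col (adj A) = dim_row A"
  by (auto simp: adj_def)

lemma adj_carrier2: "A \<in> carrier_mat m n \<Longrightarrow> adj A \<in> carrier_mat n m"
  by (auto simp: adj_def)

lemma index_adj[simp]: "i < dim_col A \<Longrightarrow> j < dim_row A \<Longrightarrow> adj A $$ (i,j) = cnj (A $$ (j,i))"
  by (simp add: adj_def)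

lemma adj_adj[simp]: "adj (adj A) = A"
  by (rule eq_matI) auto

lemma adj_mult: assumes "A \<in> carrier_mat m n" "B \<in> carrier_mat n k"
  shows "adj (A * B) = adj B * adj A"
  using assms
  by (intro eq_matI) (auto simp: scalar_prod_def cnj_sum mult.commute)

lemma adj_add: assumes "A \<in> carrier_mat m n" "B \<in> carrier_mat m n"
  shows "adj (A + B) = adj A + adj B"
  using assms by (intro eq_matI) auto

lemma adj_minus: assumes "A \<in> carrier_mat m n" "B \<in> carrier_mat m n"
  shows "adj (A - B) = adj A - adj B"
  using assms by (intro eq_matI) auto

lemma adj_smult: "adj (c \<cdot>\<^sub>m A) = cnj c \<cdot>\<^sub>m adj A"
  by (intro eq_matI) auto

lemma adj_uminus: "adj (- A) = - adj A"
  by (intro eq_matI) auto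

lemma adj_zero[simp]: "adj (0\<^sub>m m n) = 0\<^sub>m n m"
  by (intro eq_matI) auto

lemma adj_one[simp]: "adj (1\<^sub>m n) = 1\<^sub>m n"
  by (intro eq_matI) auto

lemma adj_self_zero: assumes A: "A \<in> carrier_mat m n" and z: "adj A * A = 0\<^sub>m n n"
  shows "A = 0\<^sub>m m n"
proof (rule eq_matI)
  fix i j assume i: "i < dim_row (0\<^sub>m m n)" and j: "j < dim_col (0\<^sub>m m n)"
  have "(adj A * A) $$ (j,j) = 0" using z i j by simp
  hence "(\<Sum>k<m. cnj (A $$ (k,j)) * A $$ (k,j)) = 0"
    using A i j by (simp add: scalar_prod_def atLeast0LessThan)
  hence s: "(\<Sum>k<m. complex_of_real ((cmod (A $$ (k,j)))\<^sup>2)) = 0"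
    using complex_norm_square[symmetric] by (simp add: mult.commute)
  hence "(\<Sum>k<m. (cmod (A $$ (k,j)))\<^sup>2) = 0"
    by (metis (no_types) of_real_eq_0_iff of_real_sum)
  hence "\<forall>k\<in>{..<m}. (cmod (A $$ (k,j)))\<^sup>2 = 0"
    by (subst sum_nonneg_eq_0_iff[symmetric]) auto
  thus "A $$ (i,j) = 0\<^sub>m m n $$ (i,j)" using i j by auto
qed (use A in auto)




definition mp :: "nat \<Rightarrow> complex mat \<Rightarrow> complex mat \<Rightarrow> bool" where
  "mp n M X \<longleftrightarrow> X \<in> carrier_mat n n \<and> M * X * M = M \<and> X * M * X = X \<and>
                     adj (M * X) = M * X \<and> adj (X * M) = X * M"

lemma pinv_mp: "pinv n M = (THE X. mp n M X)"
  unfolding pinv_def mp_def by simp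

lemma mp_unique: assumes M: "M \<in> carrier_mat n n" and X: "mp n M X" and Y: "mp n M Y"
  shows "X = Y"
proof -
  have Xc: "X \<in> carrier_mat n n" and Yc: "Y \<in> carrier_mat n n" using X Y by (auto simp: mp_def)
  note c = mult_carrier_mat[of _ n n _ n]
  note ac = assoc_mult_mat[of _ n n _ n _ n]
  have x1: "M * X * M = M" "X * M * X = X" "adj (M * X) = M * X" "adj (X * M) = X * M" using X by (auto simp: mp_def)
  have y1: "M * Y * M = M" "Y * M * Y = Y" "adj (M * Y) = M * Y" "adj (Y * M) = Y * M" using Y by (auto simp: mp_def)
  have aM: "adj M = adj M * adj Y * adj M"
    by (subst (1) y1(1)[symmetric]) (simp add: adj_mult[of _ n n _ n] M Yc c adj_carrier2 ac)
  have aM2: "adj M = adj M * adj X * adj M"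
    by (subst (1) x1(1)[symmetric]) (simp add: adj_mult[of _ n n _ n] M Xc c adj_carrier2 ac)
  have "X = X * (M * X)" using x1(2) by (simp add: ac M Xc)
  also have "\<dots> = X * adj (M * X)" using x1(3) by simp
  also have "\<dots> = X * (adj X * adj M)" by (simp add: adj_mult[of _ n n _ n] M Xc)
  also have "\<dots> = X * (adj X * (adj M * adj Y * adj M))" using aM by simp
  also have "\<dots> = X * (adj (M * X) * adj (M * Y))"
    by (simp add: adj_mult[of _ n n _ n] M Xc Yc ac c adj_carrier2)
  also have "\<dots> = X * ((M * X) * (M * Y))" using x1(3) y1(3) by simp
  also have "\<dots> = (X * M * X) * M * Y" by (simp add: ac c M Xc Yc)
  finally have eX: "X = X * M * Y" using x1(2) by simp
  have "Y = (Y * M) * Y" using y1(2) by simp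
  also have "\<dots> = adj (Y * M) * Y" using y1(4) by simp
  also have "\<dots> = (adj M * adj Y) * Y" by (simp add: adj_mult[of _ n n _ n] M Yc)
  also have "\<dots> = ((adj M * adj X * adj M) * adj Y) * Y" using aM2 by simp
  also have "\<dots> = (adj (X * M) * adj (Y * M)) * Y"
    by (simp add: adj_mult[of _ n n _ n] M Xc Yc ac c adj_carrier2)
  also have "\<dots> = ((X * M) * (Y * M)) * Y" using x1(4) y1(4) by simp
  also have "\<dots> = X * M * (Y * M * Y)" by (simp add: ac c M Xc Yc)
  finally have eY: "Y = X * M * Y" using y1(2) by simp
  show ?thesis using eX eY by simp
qed




lemma g1inv_ref: assumes C: "(C::complex mat) \<in> carrier_mat n n" and p: "pivot_fun C f n"
  shows "C * mat n n (\<lambda>(j,i). if f i < n \<and> j = f i then 1 else 0) * C = C"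
proof -
  define H where "H = mat n n (\<lambda>(j,i). if f i < n \<and> j = f i then (1::complex) else 0)"
  have dr: "dim_row C = n" using C by auto
  note pD = pivot_funD[OF dr p]
  have CH: "C * H = mat n n (\<lambda>(k,i). if f i < n \<and> k = i then 1 else 0)"
  proof (rule eq_matI)
    fix k i assume k: "k < dim_row (mat n n (\<lambda>(k,i). if f i < n \<and> k = i then 1 else (0::complex)))"
      and i: "i < dim_col (mat n n (\<lambda>(k,i). if f i < n \<and> k = i then 1 else (0::complex)))"
    have "(C * H) $$ (k,i) = (\<Sum>j<n. C $$ (k,j) * (if f i < n \<and> j = f i then 1 else 0))"
      using k i C by (simp add: H_def scalar_prod_def atLeast0LessThan)
    also have "\<dots> = (if f i < n then C $$ (k, f i) else 0)"
      by (auto simp: if_distrib cong: if_cong)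
    also have "\<dots> = (if f i < n \<and> k = i then 1 else 0)"
      using pD(4)[of i] pD(5)[of i k] k i by auto
    finally show "(C * H) $$ (k,i) = mat n n (\<lambda>(k,i). if f i < n \<and> k = i then 1 else (0::complex)) $$ (k,i)"
      using k i by simp
  qed (use C in \<open>auto simp: H_def\<close>)
  have "C * H * C = C"
  proof (rule eq_matI)
    fix k l assume k: "k < dim_row C" and l: "l < dim_col C"
    have "(C * H * C) $$ (k,l) = (\<Sum>i<n. (if f i < n \<and> k = i then 1 else 0) * C $$ (i,l))"
      using k l C by (simp add: CH scalar_prod_def atLeast0LessThan)
    also have "\<dots> = (if f k < n then C $$ (k,l) else 0)"
      using k C by (subst sum.cong[OF refl, where h="\<lambda>i. if i = k then (if f k < n then C $$ (k,l) else 0) else 0"]) auto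
    also have "\<dots> = C $$ (k,l)"
      using pD(1)[of k] pD(2)[of k l] k l C by auto
    finally show "(C * H * C) $$ (k,l) = C $$ (k,l)" .
  qed (use C in \<open>auto simp: H_def\<close>)
  thus ?thesis by (simp add: H_def)
qed

lemma g1inv_exists: assumes A: "(A::complex mat) \<in> carrier_mat n n"
  shows "\<exists>G \<in> carrier_mat n n. A * G * A = A"
proof -
  define C where "C = gauss_jordan_single A"
  note gj = gauss_jordan_single[OF A C_def[symmetric]]
  from gj(3) obtain f where p: "pivot_fun C f (dim_col C)" unfolding row_echelon_form_def by auto
  have Cc: "C \<in> carrier_mat n n" using gj(2) .
  hence p: "pivot_fun C f n" using p by simp
  from gj(4) obtain P Q where PQ: "C = P * A" "P \<in> carrier_mat n n" "Q \<in> carrier_mat n n"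
     "P * Q = 1\<^sub>m n" "Q * P = 1\<^sub>m n" by auto
  define H where "H = mat n n (\<lambda>(j,i). if f i < n \<and> j = f i then (1::complex) else 0)"
  have Hc: "H \<in> carrier_mat n n" by (simp add: H_def)
  have CHC: "C * H * C = C" using g1inv_ref[OF Cc p] by (simp add: H_def)
  have AQC: "A = Q * C"
    using PQ A by (simp add: assoc_mult_mat[symmetric, of Q n n P n A n])
  have "A * (H * P) * A = Q * (C * H * C)"
    using PQ A Hc Cc by (simp add: AQC assoc_mult_mat[of _ n n _ n _ n] mult_carrier_mat[of _ n n _ n])
  also have "\<dots> = A" using CHC AQC by simp
  finally show ?thesis using Hc PQ by (intro bexI[of _ "H * P"]) auto
qed




lemma minus_zero_eq: assumes "(A::complex mat) \<in> carrier_mat m n" "B \<in> carrier_mat m n" "A - B = 0\<^sub>m m n"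
  shows "A = B"
proof (rule eq_matI)
  fix i j assume ij: "i < dim_row B" "j < dim_col B"
  have "(A - B) $$ (i,j) = 0" using assms ij by simp
  moreover have "(A - B) $$ (i,j) = A $$ (i,j) - B $$ (i,j)" using assms(1,2) ij by simp
  ultimately show "A $$ (i,j) = B $$ (i,j)" by simp
qed (use assms in auto)

lemma mp_exists: assumes A: "A \<in> carrier_mat n n" and H: "adj A = A"
  shows "\<exists>X. mp n A X"
proof -
  note c = mult_carrier_mat[of _ n n _ n]
  note ac = assoc_mult_mat[of _ n n _ n _ n]
  have A2: "A * A \<in> carrier_mat n n" using A by simp
  obtain G0 where G0: "G0 \<in> carrier_mat n n" "A * A * G0 * (A * A) = A * A"
    using g1inv_exists[OF A2] by auto
  define G where "G = G0 * (A * A) * adj G0"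
  have aG0: "adj G0 \<in> carrier_mat n n" using G0 by (simp add: adj_carrier2)
  have Gc: "G \<in> carrier_mat n n" using G0 A aG0 unfolding G_def
    by (intro mult_carrier_mat[of _ n n _ n]) auto
  have GH: "adj G = G"
    using G0 A H aG0 by (simp add: G_def adj_mult[of _ n n _ n] c ac)
  have hA2: "adj (A * A) = A * A" using A H by (simp add: adj_mult[of _ n n _ n])
  have "adj (A * A * G0 * (A * A)) = A * A * adj G0 * (A * A)"
    using A G0(1) aG0 H by (simp add: adj_mult[of _ n n _ n] c ac)
  hence e2: "A * A * adj G0 * (A * A) = A * A" using G0(2) hA2 by simp
  have e1: "A * A * G * (A * A) = A * A"
  proof -
    have "A * A * G * (A * A) = (A * A * G0 * (A * A)) * adj G0 * (A * A)"
      using A G0(1) aG0 by (simp add: G_def c ac)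
    also have "\<dots> = A * A * adj G0 * (A * A)" using G0(2) by simp
    finally show ?thesis using e2 by simp
  qed
  have e1t: "A * (A * (G * (A * (A * Y)))) = A * (A * Y)" if Y: "Y \<in> carrier_mat n k" for Y k
  proof -
    have "A * (A * (G * (A * (A * Y)))) = (A * A * G * (A * A)) * Y"
      using A Gc Y by (simp add: assoc_mult_mat[of _ n n _ n _ k] mult_carrier_mat[of _ n n _ k] c)
    also have "\<dots> = A * (A * Y)" using e1 A Y by (simp add: assoc_mult_mat[of _ n n _ n _ k])
    finally show ?thesis .
  qed
  have e1r: "A * (A * (G * (A * A))) = A * A" using e1 A Gc by (simp add: ac c)
  define D where "D = A * G * (A * A) - A"
  have Dc: "D \<in> carrier_mat n n" unfolding D_def
    by (rule minus_carrier_mat) (use A Gc in \<open>auto intro!: mult_carrier_mat[of _ n n _ n]\<close>)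
  have aD: "adj D = A * A * G * A - A"
    using A Gc GH H by (simp add: D_def adj_minus[of _ n n] adj_mult[of _ n n _ n] c ac)
  have "adj D * D = 0\<^sub>m n n"
  proof -
    have "adj D * D = (A * A * G * A - A) * (A * G * (A * A) - A)" by (subst aD) (simp add: D_def)
    also have "\<dots> = 0\<^sub>m n n"
      using A Gc
      by (simp add: mult_minus_distrib_mat[of _ n n _ n] minus_mult_distrib_mat[of _ n n _ _ n] c ac e1t e1r minus_carrier_mat)
    finally show ?thesis .
  qed
  hence "D = 0\<^sub>m n n" using adj_self_zero[OF Dc] by simp
  hence h1: "A * G * (A * A) = A"
    using minus_zero_eq[of "A * G * (A * A)" n n A] A Gc unfolding D_def
    by (meson mult_carrier_mat)
  have h2: "A * A * G * A = A"
  proof -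
    have "A * A * G * A = adj (A * G * (A * A))"
      using A Gc GH H by (simp add: adj_mult[of _ n n _ n] c ac)
    thus ?thesis using h1 H by simp
  qed
  have h1t: "A * (G * (A * (A * Y))) = A * Y" if Y: "Y \<in> carrier_mat n k" for Y k
  proof -
    have "A * (G * (A * (A * Y))) = (A * G * (A * A)) * Y"
      using A Gc Y by (simp add: assoc_mult_mat[of _ n n _ n _ k] mult_carrier_mat[of _ n n _ k] c)
    thus ?thesis using h1 by simp
  qed
  have h2t: "A * (A * (G * (A * Y))) = A * Y" if Y: "Y \<in> carrier_mat n k" for Y k
  proof -
    have "A * (A * (G * (A * Y))) = (A * A * G * A) * Y"
      using A Gc Y by (simp add: assoc_mult_mat[of _ n n _ n _ k] mult_carrier_mat[of _ n n _ k] c)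
    thus ?thesis using h2 by simp
  qed
  have h1r: "A * (G * (A * A)) = A" using h1 A Gc by (simp add: ac c)
  have h2r: "A * (A * (G * A)) = A" using h2 A Gc by (simp add: ac c)
  define X where "X = A * G * A * G * A"
  have Xc: "X \<in> carrier_mat n n" using A Gc unfolding X_def
    by (meson mult_carrier_mat)
  have K: "adj (A * (G * A)) = A * (G * A)" using A Gc GH H by (simp add: adj_mult[of _ n n _ n] c)
  have 1: "A * X * A = A" using A Gc by (simp add: X_def ac c h1t[where k=n] h2t[where k=n] h1r h2r)
  have 2: "X * A * X = X" using A Gc by (simp add: X_def ac c h1t[where k=n] h2t[where k=n] h1r h2r)
  have 3: "A * X = A * (G * A)" using A Gc by (simp add: X_def ac c h1t[where k=n] h2t[where k=n] h1r h2r)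
  have 4: "X * A = A * (G * A)" using A Gc by (simp add: X_def ac c h1t[where k=n] h2t[where k=n] h1r h2r)
  have "mp n A X" unfolding mp_def using Xc 1 2 3 4 K by simp
  thus ?thesis by blast
qed

lemma pinv_props: assumes A: "A \<in> carrier_mat n n" and H: "adj A = A"
  shows "mp n A (pinv n A)"
proof -
  obtain X where X: "mp n A X" using mp_exists[OF A H] by blast
  have "pinv n A = X" unfolding pinv_mp
    apply (rule the_equality)
     apply (rule X)
    using mp_unique[OF A _ X] by blast
  thus ?thesis using X by simp
qed

lemma pinv_herm: assumes A: "A \<in> carrier_mat n n" and H: "adj A = A"
  shows "pinv n A \<in> carrier_mat n n" "adj (pinv n A) = pinv n A"
        "pinv n A * A * pinv n A = pinv n A"
proof -
  note P = pinv_props[OF A H]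
  define X where "X = pinv n A"
  have Xc: "X \<in> carrier_mat n n" and m: "mp n A X" using P by (auto simp: X_def mp_def)
  have m1: "A * X * A = A" "X * A * X = X" "adj (A * X) = A * X" "adj (X * A) = X * A"
    using m by (auto simp: mp_def)
  have aX: "adj X \<in> carrier_mat n n" using Xc by (simp add: adj_carrier2)
  have q1: "A * adj X * A = A"
  proof -
    have "A * adj X * A = adj (A * X * A)" using A Xc aX H
      by (simp add: adj_mult[of _ n n _ n] mult_carrier_mat[of _ n n _ n] assoc_mult_mat[of _ n n _ n _ n])
    thus ?thesis using m1 H by simp
  qed
  have q2: "adj X * A * adj X = adj X"
  proof -
    have "adj X * A * adj X = adj (X * A * X)" using A Xc aX H
      by (simp add: adj_mult[of _ n n _ n] mult_carrier_mat[of _ n n _ n] assoc_mult_mat[of _ n n _ n _ n])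
    thus ?thesis using m1 H by simp
  qed
  have q3: "A * adj X = X * A"
    using m1(4) A Xc H by (simp add: adj_mult[of _ n n _ n])
  have q4: "adj X * A = A * X"
    using m1(3) A Xc H by (simp add: adj_mult[of _ n n _ n])
  have "mp n A (adj X)"
    unfolding mp_def using aX q1 q2 q3 q4 m1 by simp
  hence "adj X = X" using mp_unique[OF A _ m] by blast
  thus "pinv n A \<in> carrier_mat n n" "adj (pinv n A) = pinv n A" "pinv n A * A * pinv n A = pinv n A"
    using Xc m by (auto simp: X_def mp_def)
qed



lemma assoc': assumes "dim_col A = dim_row B" "dim_col B = dim_row C" shows "(A::'a::comm_ring_1 mat) * B * C = A * (B * C)"
proof -
  have "A \<in> carrier_mat (dim_row A) (dim_row B)" using assms(1) by (intro carrier_matI) auto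
  moreover have "B \<in> carrier_mat (dim_row B) (dim_row C)" using assms(2) by (intro carrier_matI) auto
  moreover have "C \<in> carrier_mat (dim_row C) (dim_col C)" by (intro carrier_matI) auto
  ultimately show ?thesis by (rule assoc_mult_mat)
qed

lemma add_mult': assumes "dim_row A = dim_row B" "dim_col A = dim_col B" "dim_col A = dim_row C"
  shows "((A::'a::comm_ring_1 mat) + B) * C = A * C + B * C"
  by (rule add_mult_distrib_mat[of A "dim_row A" "dim_col A" B C "dim_col C"]) (use assms in \<open>auto intro!: carrier_matI\<close>)

lemma mult_add': assumes "dim_row B = dim_row C" "dim_col B = dim_col C" "dim_col A = dim_row B"
  shows "(A::'a::comm_ring_1 mat) * (B + C) = A * B + A * C"
  by (rule mult_add_distrib_mat[of A "dim_row A" "dim_col A" B "dim_col B" C]) (use assms in \<open>auto intro!: carrier_matI\<close>)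

lemma minus_mult': assumes "dim_row A = dim_row B" "dim_col A = dim_col B" "dim_col A = dim_row C"
  shows "((A::'a::comm_ring_1 mat) - B) * C = A * C - B * C"
  by (rule minus_mult_distrib_mat[of A "dim_row A" "dim_col A" B C "dim_col C"]) (use assms in \<open>auto intro!: carrier_matI\<close>)

lemma mult_minus': assumes "dim_row B = dim_row C" "dim_col B = dim_col C" "dim_col A = dim_row B"
  shows "(A::'a::comm_ring_1 mat) * (B - C) = A * B - A * C"
  by (rule mult_minus_distrib_mat[of A "dim_row A" "dim_col A" B "dim_col B" C]) (use assms in \<open>auto intro!: carrier_matI\<close>)

lemma adj_mult': "dim_col A = dim_row B \<Longrightarrow> adj (A * B) = adj B * adj A"
  by (rule adj_mult[of A "dim_row A" "dim_col A" B "dim_col B"]) (auto intro!: carrier_matI)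

lemma adj_add': "dim_row A = dim_row B \<Longrightarrow> dim_col A = dim_col B \<Longrightarrow> adj (A + B) = adj A + adj B"
  by (rule adj_add[of A "dim_row A" "dim_col A" B]) (auto intro!: carrier_matI)

lemma schur_qf:
  fixes P E1 E2 X xv :: "complex mat"
  assumes P: "P \<in> carrier_mat k k" and E1: "E1 \<in> carrier_mat k a" and E2: "E2 \<in> carrier_mat k b"
    and X: "X \<in> carrier_mat b b" and xv: "xv \<in> carrier_mat a 1"
    and XH: "adj X = X" and XPX: "X * (adj E2 * P * E2) * X = X"
    and PH: "adj (adj E2 * P * E1) = adj E1 * P * E2"
  defines "yv \<equiv> -(X * (adj E2 * P * E1) * xv)"
  defines "w \<equiv> E1 * xv + E2 * yv"
  shows "(adj w * P * w) $$ (0,0) =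
     (adj xv * (adj E1 * P * E1 - (adj E1 * P * E2) * X * (adj E2 * P * E1)) * xv) $$ (0,0)"
proof -
  note d = P[THEN carrier_matD(1)] P[THEN carrier_matD(2)] E1[THEN carrier_matD(1)] E1[THEN carrier_matD(2)]
    E2[THEN carrier_matD(1)] E2[THEN carrier_matD(2)] X[THEN carrier_matD(1)] X[THEN carrier_matD(2)]
    xv[THEN carrier_matD(1)] xv[THEN carrier_matD(2)]
  define P11 where "P11 = adj E1 * P * E1"
  define P12 where "P12 = adj E1 * P * E2"
  define P21 where "P21 = adj E2 * P * E1"
  define P22 where "P22 = adj E2 * P * E2"
  have dy: "dim_row yv = b" "dim_col yv = 1" using d by (auto simp: yv_def)
  have "adj w = adj xv * adj E1 + adj yv * adj E2"
    unfolding w_def using d dy by (simp add: adj_add' adj_mult')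
  hence "adj w * P * w = (adj xv * adj E1 + adj yv * adj E2) * P * (E1 * xv + E2 * yv)"
    by (simp add: w_def)
  also have "\<dots> = (adj xv * (P11 * xv) + adj yv * (P21 * xv)) + (adj xv * (P12 * yv) + adj yv * (P22 * yv))"
    unfolding P11_def P12_def P21_def P22_def using d dy
    by (simp add: add_mult' mult_add' assoc')
  finally have e1: "adj w * P * w = (adj xv * (P11 * xv) + adj yv * (P21 * xv)) + (adj xv * (P12 * yv) + adj yv * (P22 * yv))" .
  have dP: "dim_row P11 = a" "dim_col P11 = a" "dim_row P12 = a" "dim_col P12 = b"
     "dim_row P21 = b" "dim_col P21 = a" "dim_row P22 = b" "dim_col P22 = b"
    using d by (auto simp: P11_def P12_def P21_def P22_def)
  have yv_eq: "yv = -(X * P21 * xv)" by (simp add: yv_def P21_def)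
  define T where "T = adj xv * (P12 * (X * (P21 * xv)))"
  have dT: "dim_row T = 1" "dim_col T = 1" using d dP by (auto simp: T_def)
  have ayv: "adj yv = - (adj xv * (P12 * X))"
    unfolding yv_def using d dP XH PH
    by (simp add: adj_uminus adj_mult' assoc' P12_def P21_def)
  have t12: "adj xv * (P12 * yv) = - T" unfolding T_def yv_eq using d dP by (simp add: assoc')
  have t21: "adj yv * (P21 * xv) = - T" unfolding T_def ayv using d dP by (simp add: assoc')
  have XPX': "X * (P22 * (X * Z)) = X * Z" if "dim_row Z = b" for Z
  proof -
    have "X * (P22 * (X * Z)) = (X * P22 * X) * Z" using d dP that by (simp add: assoc')
    thus ?thesis using XPX unfolding P22_def by simp
  qed
  have t22: "adj yv * (P22 * yv) = T" unfolding T_def ayv unfolding yv_eq using d dP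
    by (simp add: assoc' XPX')
  have rhs: "adj xv * ((P11 - P12 * X * P21) * xv) = adj xv * (P11 * xv) - T"
    unfolding T_def using d dP by (simp add: minus_mult' mult_minus' assoc')
  have "(adj w * P * w) $$ (0,0) = (adj xv * (P11 * xv)) $$ (0,0) - T $$ (0,0)"
    unfolding e1 t12 t21 t22 using d dP dT by simp
  also have "\<dots> = (adj xv * ((P11 - P12 * X * P21) * xv)) $$ (0,0)"
    unfolding rhs using d dP dT by simp
  also have "\<dots> = (adj xv * (P11 - P12 * X * P21) * xv) $$ (0,0)"
    using d dP by (simp add: assoc')
  finally show ?thesis unfolding P11_def P12_def P21_def P22_def .
qed



definition Esel :: "nat \<Rightarrow> nat \<Rightarrow> nat \<Rightarrow> complex mat" where
  "Esel n m s = mat n m (\<lambda>(i,j). if i = j + s then 1 else 0)"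

lemma Esel_carrier[simp]: "Esel n m s \<in> carrier_mat n m" "dim_row (Esel n m s) = n" "dim_col (Esel n m s) = m"
  by (auto simp: Esel_def)

lemma sum_delta_nat: "(k::nat) < n \<Longrightarrow> (\<Sum>l<n. (if l = k then (1::complex) else 0) * f l) = f k"
proof -
  assume k: "k < n"
  have "(\<Sum>l<n. (if l = k then (1::complex) else 0) * f l) = (\<Sum>l<n. if l = k then f l else 0)"
    by (rule sum.cong) auto
  also have "\<dots> = f k" using k by (subst sum.delta) auto
  finally show ?thesis .
qed

lemma sum_delta_nat': "(k::nat) < n \<Longrightarrow> (\<Sum>l<n. f l * (if l = k then (1::complex) else 0)) = f k"
  using sum_delta_nat[of k n f] by (simp add: mult.commute)

lemma adjE_mult: assumes M: "M \<in> carrier_mat n c" and mo: "m + s \<le> n"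
  shows "adj (Esel n m s) * M = mat m c (\<lambda>(i,k). M $$ (i + s, k))"
proof (rule eq_matI)
  fix i k assume i: "i < dim_row (mat m c (\<lambda>(i,k). M $$ (i + s, k)))" and k: "k < dim_col (mat m c (\<lambda>(i,k). M $$ (i + s, k)))"
  have "(adj (Esel n m s) * M) $$ (i,k) = (\<Sum>l<n. (if l = i + s then 1 else 0) * M $$ (l,k))"
    using M i k by (simp add: scalar_prod_def atLeast0LessThan Esel_def if_distrib[of cnj] cong: if_cong)
  also have "\<dots> = M $$ (i + s, k)" using i mo by (intro sum_delta_nat) auto
  finally show "(adj (Esel n m s) * M) $$ (i,k) = mat m c (\<lambda>(i,k). M $$ (i + s, k)) $$ (i,k)"
    using i k by simp
qed (use M in auto)

lemma mult_E: assumes M: "M \<in> carrier_mat r n" and mo: "m + s \<le> n"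
  shows "M * Esel n m s = mat r m (\<lambda>(i,k). M $$ (i, k + s))"
proof (rule eq_matI)
  fix i k assume i: "i < dim_row (mat r m (\<lambda>(i,k). M $$ (i, k + s)))" and k: "k < dim_col (mat r m (\<lambda>(i,k). M $$ (i, k + s)))"
  have "(M * Esel n m s) $$ (i,k) = (\<Sum>l<n. M $$ (i,l) * (if l = k + s then 1 else 0))"
    using M i k by (simp add: scalar_prod_def atLeast0LessThan Esel_def)
  also have "\<dots> = M $$ (i, k + s)" using k mo by (intro sum_delta_nat') auto
  finally show "(M * Esel n m s) $$ (i,k) = mat r m (\<lambda>(i,k). M $$ (i, k + s)) $$ (i,k)"
    using i k by simp
qed (use M in auto)

lemma block_sel: assumes M: "M \<in> carrier_mat n n" and "m + s \<le> n" "p + q \<le> n"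
  shows "adj (Esel n m s) * M * Esel n p q = mat m p (\<lambda>(i,j). M $$ (i + s, j + q))"
proof -
  have "adj (Esel n m s) * M = mat m n (\<lambda>(i,k). M $$ (i + s, k))" using assms by (simp add: adjE_mult)
  moreover have "mat m n (\<lambda>(i,k). M $$ (i + s, k)) * Esel n p q = mat m p (\<lambda>(i,k). mat m n (\<lambda>(i,k). M $$ (i + s, k)) $$ (i, k + q))"
    using assms by (intro mult_E) auto
  ultimately show ?thesis using assms by (auto intro!: eq_matI)
qed




lemma dsum3_carrier: assumes "gA \<in> carrier_mat 2 2" "gB \<in> carrier_mat 2 2" "gC \<in> carrier_mat 2 2"
  shows "dsum3 gA gB gC \<in> carrier_mat 6 6"
  using assms unfolding dsum3_def by (intro carrier_matI) auto

lemma dsum3_index: assumes "gA \<in> carrier_mat 2 2" "gB \<in> carrier_mat 2 2" "gC \<in> carrier_mat 2 2" "i < 6" "j < 6"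
  shows "dsum3 gA gB gC $$ (i,j) = (if i < 2 \<and> j < 2 then gA $$ (i,j) else if 2 \<le> i \<and> i < 4 \<and> 2 \<le> j \<and> j < 4 then gB $$ (i-2,j-2)
     else if 4 \<le> i \<and> 4 \<le> j then gC $$ (i-4,j-4) else 0)"
  using assms unfolding dsum3_def by (auto simp: index_mat_four_block)

lemma Jflip_index: "i < 2*n \<Longrightarrow> j < 2*n \<Longrightarrow> Jflip n S $$ (i,j) = (if i div 2 = j div 2
      then (if i div 2 \<in> S then -1 else 1) * J1entry (i mod 2) (j mod 2) else 0)"
  by (simp add: Jflip_def)

lemma D_index:
  assumes gA: "gA \<in> carrier_mat 2 2" and gB: "gB \<in> carrier_mat 2 2" and gC: "gC \<in> carrier_mat 2 2"
    and SC: "SC = (if fl then {0} else {})" and S6: "S6 = (if fl then {2} else {})"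
    and ij: "i < 6" "j < 6"
  shows "(cmat (dsum3 gA gB gC) - \<i> \<cdot>\<^sub>m Jflip 3 S6) $$ (i,j) =
     (if i < 2 \<and> j < 2 then (cmat gA - \<i> \<cdot>\<^sub>m Jflip 1 {}) $$ (i,j)
      else if 2 \<le> i \<and> i < 4 \<and> 2 \<le> j \<and> j < 4 then (cmat gB - \<i> \<cdot>\<^sub>m Jflip 1 {}) $$ (i-2,j-2)
      else if 4 \<le> i \<and> 4 \<le> j then (cmat gC - \<i> \<cdot>\<^sub>m Jflip 1 SC) $$ (i-4,j-4) else 0)"
proof -
  have dc: "dsum3 gA gB gC \<in> carrier_mat 6 6" using dsum3_carrier[OF gA gB gC] .
  have J3: "Jflip 3 S6 \<in> carrier_mat 6 6" by (simp add: Jflip_def)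
  have J1: "Jflip 1 S \<in> carrier_mat 2 2" for S by (simp add: Jflip_def)
  have l: "(cmat (dsum3 gA gB gC) - \<i> \<cdot>\<^sub>m Jflip 3 S6) $$ (i,j) =
     complex_of_real (dsum3 gA gB gC $$ (i,j)) - \<i> * Jflip 3 S6 $$ (i,j)"
    using dc J3 ij by simp
  have r: "\<And>a b S g m. a < 2*m \<Longrightarrow> b < 2*m \<Longrightarrow> g \<in> carrier_mat (2*m) (2*m) \<Longrightarrow> (cmat g - \<i> \<cdot>\<^sub>m Jflip m S) $$ (a,b) =
     complex_of_real (g $$ (a,b)) - \<i> * Jflip m S $$ (a,b)"
  proof -
    fix a b S g m assume a: "a < 2*m" and b: "b < 2*m" and g: "(g::real mat) \<in> carrier_mat (2*m) (2*m)"
    have "dim_row g = 2*m" "dim_col g = 2*m" "dim_row (Jflip m S) = 2*m" "dim_col (Jflip m S) = 2*m"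
      using g by (auto simp: Jflip_def)
    thus "(cmat g - \<i> \<cdot>\<^sub>m Jflip m S) $$ (a,b) = complex_of_real (g $$ (a,b)) - \<i> * Jflip m S $$ (a,b)"
      using a b by simp
  qed
  have ij': "i = 0 \<or> i = 1 \<or> i = 2 \<or> i = 3 \<or> i = 4 \<or> i = 5" "j = 0 \<or> j = 1 \<or> j = 2 \<or> j = 3 \<or> j = 4 \<or> j = 5" using ij by auto
  have J1e: "J1entry 0 0 = 0" "J1entry 0 1 = -1" "J1entry 1 0 = 1" "J1entry 1 1 = 0" by (auto simp: J1entry_def)
  note ds = dsum3_index[OF gA gB gC]
  show ?thesis
    unfolding l using ij'
    apply (elim disjE)
    apply (simp_all add: r gA gB gC ds Jflip_index J1entry_def S6 SC)
    done
qed

lemma qform_D: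
  assumes gA: "gA \<in> carrier_mat 2 2" and gB: "gB \<in> carrier_mat 2 2" and gC: "gC \<in> carrier_mat 2 2"
    and SC: "SC = (if fl then {0} else {})" and S6: "S6 = (if fl then {2} else {})"
  shows "qform 6 (cmat (dsum3 gA gB gC) - \<i> \<cdot>\<^sub>m Jflip 3 S6) v =
     qform 2 (cmat gA - \<i> \<cdot>\<^sub>m Jflip 1 {}) v + qform 2 (cmat gB - \<i> \<cdot>\<^sub>m Jflip 1 {}) (\<lambda>i. v (i+2))
     + qform 2 (cmat gC - \<i> \<cdot>\<^sub>m Jflip 1 SC) (\<lambda>i. v (i+4))"
proof -
  define DA where "DA = cmat gA - \<i> \<cdot>\<^sub>m Jflip 1 {}"
  define DB where "DB = cmat gB - \<i> \<cdot>\<^sub>m Jflip 1 {}"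
  define DC where "DC = cmat gC - \<i> \<cdot>\<^sub>m Jflip 1 SC"
  have "qform 6 (cmat (dsum3 gA gB gC) - \<i> \<cdot>\<^sub>m Jflip 3 S6) v =
    (\<Sum>i<6. \<Sum>j<6. cnj (v i) * (if i < 2 \<and> j < 2 then DA $$ (i,j)
      else if 2 \<le> i \<and> i < 4 \<and> 2 \<le> j \<and> j < 4 then DB $$ (i-2,j-2)
      else if 4 \<le> i \<and> 4 \<le> j then DC $$ (i-4,j-4) else 0) * v j)"
    unfolding qform_def DA_def DB_def DC_def
    by (intro sum.cong refl) (simp add: D_index[OF gA gB gC SC S6])
  also have "\<dots> = qform 2 DA v + qform 2 DB (\<lambda>i. v (i+2)) + qform 2 DC (\<lambda>i. v (i+4))"
    unfolding qform_def by (simp add: eval_nat_numeral lessThan_Suc algebra_simps)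
  finally show ?thesis unfolding DA_def DB_def DC_def .
qed




definition colv :: "nat \<Rightarrow> (nat \<Rightarrow> complex) \<Rightarrow> complex mat" where
  "colv n v = mat n 1 (\<lambda>(i,j). v i)"

lemma colv_carrier[simp]: "colv n v \<in> carrier_mat n 1" "dim_row (colv n v) = n" "dim_col (colv n v) = 1"
  by (auto simp: colv_def)

lemma qform_colv: assumes M: "M \<in> carrier_mat n n"
  shows "qform n M v = (adj (colv n v) * M * colv n v) $$ (0,0)"
proof -
  have "(adj (colv n v) * M * colv n v) $$ (0,0) = (\<Sum>j<n. (\<Sum>i<n. cnj (v i) * M $$ (i,j)) * v j)"
    using M by (simp add: scalar_prod_def atLeast0LessThan colv_def)
  also have "\<dots> = (\<Sum>j<n. \<Sum>i<n. cnj (v i) * M $$ (i,j) * v j)"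
    by (simp add: sum_distrib_right)
  also have "\<dots> = qform n M v" unfolding qform_def by (rule sum.swap)
  finally show ?thesis by simp
qed

lemma colv_of: assumes "w \<in> carrier_mat n 1" shows "colv n (\<lambda>i. w $$ (i,0)) = w"
  using assms by (intro eq_matI) (auto simp: colv_def)

lemma qform_add: assumes "A \<in> carrier_mat n n" "B \<in> carrier_mat n n"
  shows "qform n (A + B) v = qform n A v + qform n B v"
  using assms unfolding qform_def by (simp add: algebra_simps sum.distrib)

lemma qform_minus: assumes "A \<in> carrier_mat n n" "B \<in> carrier_mat n n"
  shows "qform n (A - B) v = qform n A v - qform n B v"
  using assms unfolding qform_def by (simp add: algebra_simps sum_subtractf)

lemma qform_cong: "(\<And>i. i < n \<Longrightarrow> v i = u i) \<Longrightarrow> qform n M v = qform n M u"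
  unfolding qform_def by (intro sum.cong refl) auto

lemma cmJ_index: "a < 2*m \<Longrightarrow> b < 2*m \<Longrightarrow> g \<in> carrier_mat (2*m) (2*m) \<Longrightarrow> (cmat g - \<i> \<cdot>\<^sub>m Jflip m S) $$ (a,b) =
     complex_of_real (g $$ (a,b)) - \<i> * Jflip m S $$ (a,b)"
proof -
  assume a: "a < 2*m" and b: "b < 2*m" and g: "(g::real mat) \<in> carrier_mat (2*m) (2*m)"
  have "dim_row g = 2*m" "dim_col g = 2*m" "dim_row (Jflip m S) = 2*m" "dim_col (Jflip m S) = 2*m"
    using g by (auto simp: Jflip_def)
  thus "(cmat g - \<i> \<cdot>\<^sub>m Jflip m S) $$ (a,b) = complex_of_real (g $$ (a,b)) - \<i> * Jflip m S $$ (a,b)"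
    using a b by simp
qed

lemma blkA_carrier[simp]: "blkA g \<in> carrier_mat 2 2" by (simp add: blkA_def)
lemma blkB_carrier[simp]: "blkB g \<in> carrier_mat 4 4" by (simp add: blkB_def)
lemma blkC_carrier[simp]: "blkC g \<in> carrier_mat 2 4" by (simp add: blkC_def)
lemma Jflip_carrier[simp]: "Jflip n S \<in> carrier_mat (2*n) (2*n)" by (simp add: Jflip_def)

lemma dims_extra[simp]: "dim_row (Jflip n S) = 2*n" "dim_col (Jflip n S) = 2*n"
  "dim_row (blkA g) = 2" "dim_col (blkA g) = 2" "dim_row (blkB g) = 4" "dim_col (blkB g) = 4"
  "dim_row (blkC g) = 2" "dim_col (blkC g) = 4"
  by (auto simp: Jflip_def blkA_def blkB_def blkC_def)

lemma enum2: "(i::nat) < 2 \<Longrightarrow> i = 0 \<or> i = 1" by auto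
lemma enum4: "(i::nat) < 4 \<Longrightarrow> i = 0 \<or> i = 1 \<or> i = 2 \<or> i = 3" by auto

context
  fixes \<gamma> :: "real mat" and fl :: bool
  assumes g: "\<gamma> \<in> carrier_mat 6 6" and gs: "transpose_mat \<gamma> = \<gamma>"
begin

lemma gdims[simp]: "dim_row \<gamma> = 6" "dim_col \<gamma> = 6" using g by auto

lemma gsym: "b < a \<Longrightarrow> a < 6 \<Longrightarrow> \<gamma> $$ (a,b) = \<gamma> $$ (b,a)"
proof -
  assume "b < a" "a < 6"
  hence "transpose_mat \<gamma> $$ (a,b) = \<gamma> $$ (b,a)" using g by simp
  thus ?thesis using gs by simp
qed

lemma Pidx: "a < 6 \<Longrightarrow> b < 6 \<Longrightarrow> (cmat \<gamma> - \<i> \<cdot>\<^sub>m Jflip 3 S) $$ (a,b) =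
     complex_of_real (\<gamma> $$ (a,b)) - \<i> * Jflip 3 S $$ (a,b)"
  using cmJ_index[of a 3 b \<gamma> S] g by simp

lemma blk11: "mat 2 2 (\<lambda>(i,j). (cmat \<gamma> - \<i> \<cdot>\<^sub>m Jflip 3 S6) $$ (i + 0, j + 0)) = cmat (blkA \<gamma>) - \<i> \<cdot>\<^sub>m Jflip 1 {}"
  if "S6 = (if fl then {2} else {})"
proof (rule eq_matI)
  fix i j assume i: "i < dim_row (cmat (blkA \<gamma>) - \<i> \<cdot>\<^sub>m Jflip 1 {})" and j: "j < dim_col (cmat (blkA \<gamma>) - \<i> \<cdot>\<^sub>m Jflip 1 {})"
  have i2: "i < 2" "j < 2" using i j by auto
  show "mat 2 2 (\<lambda>(i,j). (cmat \<gamma> - \<i> \<cdot>\<^sub>m Jflip 3 S6) $$ (i + 0, j + 0)) $$ (i,j) = (cmat (blkA \<gamma>) - \<i> \<cdot>\<^sub>m Jflip 1 {}) $$ (i,j)"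
    using enum2[OF i2(1)] enum2[OF i2(2)] i2
    by (elim disjE; simp add: Pidx cmJ_index[of _ 1 _ "blkA \<gamma>"] blkA_def Jflip_index J1entry_def that)
qed auto

lemma blk12: "mat 2 4 (\<lambda>(i,j). (cmat \<gamma> - \<i> \<cdot>\<^sub>m Jflip 3 S6) $$ (i + 0, j + 2)) = cmat (blkC \<gamma>)"
  if "S6 = (if fl then {2} else {})"
proof (rule eq_matI)
  fix i j assume i: "i < dim_row (cmat (blkC \<gamma>))" and j: "j < dim_col (cmat (blkC \<gamma>))"
  have i2: "i < 2" "j < 4" using i j by auto
  show "mat 2 4 (\<lambda>(i,j). (cmat \<gamma> - \<i> \<cdot>\<^sub>m Jflip 3 S6) $$ (i + 0, j + 2)) $$ (i,j) = cmat (blkC \<gamma>) $$ (i,j)"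
    using enum2[OF i2(1)] enum4[OF i2(2)] i2
    by (elim disjE; simp add: Pidx blkC_def Jflip_index J1entry_def that)
qed auto

lemma blk21: "mat 4 2 (\<lambda>(i,j). (cmat \<gamma> - \<i> \<cdot>\<^sub>m Jflip 3 S6) $$ (i + 2, j + 0)) = cmat (transpose_mat (blkC \<gamma>))"
  if "S6 = (if fl then {2} else {})"
proof (rule eq_matI)
  fix i j assume i: "i < dim_row (cmat (transpose_mat (blkC \<gamma>)))" and j: "j < dim_col (cmat (transpose_mat (blkC \<gamma>)))"
  have i2: "i < 4" "j < 2" using i j by auto
  show "mat 4 2 (\<lambda>(i,j). (cmat \<gamma> - \<i> \<cdot>\<^sub>m Jflip 3 S6) $$ (i + 2, j + 0)) $$ (i,j) = cmat (transpose_mat (blkC \<gamma>)) $$ (i,j)"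
    using enum4[OF i2(1)] enum2[OF i2(2)] i2
    by (elim disjE; simp add: Pidx blkC_def Jflip_index J1entry_def that gsym)
qed auto

lemma blk22: "mat 4 4 (\<lambda>(i,j). (cmat \<gamma> - \<i> \<cdot>\<^sub>m Jflip 3 S6) $$ (i + 2, j + 2)) = cmat (blkB \<gamma>) - \<i> \<cdot>\<^sub>m Jflip 2 S'"
  if "S6 = (if fl then {2} else {})" "S' = (if fl then {1} else {})"
proof (rule eq_matI)
  fix i j assume i: "i < dim_row (cmat (blkB \<gamma>) - \<i> \<cdot>\<^sub>m Jflip 2 S')" and j: "j < dim_col (cmat (blkB \<gamma>) - \<i> \<cdot>\<^sub>m Jflip 2 S')"
  have i2: "i < 4" "j < 4" using i j by auto
  show "mat 4 4 (\<lambda>(i,j). (cmat \<gamma> - \<i> \<cdot>\<^sub>m Jflip 3 S6) $$ (i + 2, j + 2)) $$ (i,j) = (cmat (blkB \<gamma>) - \<i> \<cdot>\<^sub>m Jflip 2 S') $$ (i,j)"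
    using enum4[OF i2(1)] enum4[OF i2(2)] i2
    by (elim disjE; simp add: Pidx cmJ_index[of _ 2 _ "blkB \<gamma>"] blkB_def Jflip_index J1entry_def that)
qed auto

lemma B_herm: "adj (cmat (blkB \<gamma>) - \<i> \<cdot>\<^sub>m Jflip 2 S') = cmat (blkB \<gamma>) - \<i> \<cdot>\<^sub>m Jflip 2 S'"
  if "S' = (if fl then {1} else {})"
proof (rule eq_matI)
  fix i j assume i: "i < dim_row (cmat (blkB \<gamma>) - \<i> \<cdot>\<^sub>m Jflip 2 S')" and j: "j < dim_col (cmat (blkB \<gamma>) - \<i> \<cdot>\<^sub>m Jflip 2 S')"
  have i2: "i < 4" "j < 4" using i j by auto
  show "adj (cmat (blkB \<gamma>) - \<i> \<cdot>\<^sub>m Jflip 2 S') $$ (i,j) = (cmat (blkB \<gamma>) - \<i> \<cdot>\<^sub>m Jflip 2 S') $$ (i,j)"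
    using enum4[OF i2(1)] enum4[OF i2(2)] i2
    by (elim disjE; simp add: cmJ_index[of _ 2 _ "blkB \<gamma>"] blkB_def Jflip_index J1entry_def that gsym)
qed auto

lemma C_adj: "adj (cmat (transpose_mat (blkC \<gamma>))) = cmat (blkC \<gamma>)"
  by (rule eq_matI) (auto simp: blkC_def)

end




lemma qform2: "qform 2 M x = cnj (x 0) * M$$(0,0) * x 0 + cnj (x 0) * M$$(0,1) * x 1
   + cnj (x 1) * M$$(1,0) * x 0 + cnj (x 1) * M$$(1,1) * x 1"
  unfolding qform_def by (simp add: eval_nat_numeral lessThan_Suc)

lemma psd2_facts:
  assumes Q: "\<And>x. qform 2 H x \<in> \<real> \<and> 0 \<le> Re (qform 2 H x)"
  shows "H$$(0,0) \<in> \<real>" "H$$(1,1) \<in> \<real>" "0 \<le> Re (H$$(0,0))" "0 \<le> Re (H$$(1,1))"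
    "H$$(1,0) = cnj (H$$(0,1))" "(cmod (H$$(0,1)))\<^sup>2 \<le> Re (H$$(0,0)) * Re (H$$(1,1))"
proof -
  define a where "a = H$$(0,0)"
  define b where "b = H$$(0,1)"
  define c where "c = H$$(1,0)"
  define d where "d = H$$(1,1)"
  have q: "qform 2 H x = cnj (x 0) * a * x 0 + cnj (x 0) * b * x 1 + cnj (x 1) * c * x 0 + cnj (x 1) * d * x 1" for x
    unfolding qform2 a_def b_def c_def d_def by simp
  have 1: "a \<in> \<real> \<and> 0 \<le> Re a" using Q[of "\<lambda>i. if i = 0 then 1 else 0"] unfolding q by simp
  have 2: "d \<in> \<real> \<and> 0 \<le> Re d" using Q[of "\<lambda>i. if i = 0 then 0 else 1"] unfolding q by simp
  have 3: "a + b + c + d \<in> \<real>" using Q[of "\<lambda>i. 1"] unfolding q by simp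
  have 4: "a + \<i> * b - \<i> * c + d \<in> \<real>" using Q[of "\<lambda>i. if i = 0 then 1 else \<i>"] unfolding q
    by (simp add: algebra_simps)
  have ra: "Im a = 0" "Im d = 0" using 1 2 by (auto simp: complex_is_Real_iff)
  have "Im (a + b + c + d) = 0" "Im (a + \<i> * b - \<i> * c + d) = 0" using 3 4 by (auto simp: complex_is_Real_iff)
  hence cb: "c = cnj b" using ra by (simp add: complex_eq_iff)
  show "H$$(0,0) \<in> \<real>" "H$$(1,1) \<in> \<real>" "0 \<le> Re (H$$(0,0))" "0 \<le> Re (H$$(1,1))" "H$$(1,0) = cnj (H$$(0,1))"
    using 1 2 cb by (auto simp: a_def b_def c_def d_def)
  define al where "al = Re a"
  define de where "de = Re d"
  have av: "a = complex_of_real al" "d = complex_of_real de" using ra by (auto simp: complex_eq_iff al_def de_def)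
  have m: "cnj b * b = complex_of_real ((cmod b)\<^sup>2)" using complex_norm_square[of b] by (simp add: mult.commute)
  have v1: "0 \<le> al * (al * de - (cmod b)\<^sup>2)"
  proof -
    have "qform 2 H (\<lambda>i. if i = 0 then - b else a) = complex_of_real (al * (al * de - (cmod b)\<^sup>2))"
      unfolding q cb unfolding av using m
      by (simp add: algebra_simps power2_eq_square)
    thus ?thesis using Q[of "\<lambda>i. if i = 0 then - b else a"] by simp
  qed
  have v2: "0 \<le> de * (al * de - (cmod b)\<^sup>2)"
  proof -
    have "qform 2 H (\<lambda>i. if i = 0 then d else - cnj b) = complex_of_real (de * (al * de - (cmod b)\<^sup>2))"
      unfolding q cb unfolding av using m
      by (simp add: algebra_simps power2_eq_square)
    thus ?thesis using Q[of "\<lambda>i. if i = 0 then d else - cnj b"] by simp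
  qed
  have v3: "0 \<le> al + de * (cmod b)\<^sup>2 - 2 * (cmod b)\<^sup>2"
  proof -
    have "qform 2 H (\<lambda>i. if i = 0 then 1 else - cnj b) = complex_of_real (al + de * (cmod b)\<^sup>2 - 2 * (cmod b)\<^sup>2)"
      unfolding q cb unfolding av using m
      by (simp add: algebra_simps power2_eq_square)
    thus ?thesis using Q[of "\<lambda>i. if i = 0 then 1 else - cnj b"] by simp
  qed
  have "(cmod b)\<^sup>2 \<le> al * de"
  proof (cases "al > 0")
    case True thus ?thesis using v1 by (simp add: zero_le_mult_iff)
  next
    case False
    hence a0: "al = 0" using 1 by (simp add: al_def)
    show ?thesis
    proof (cases "de > 0")
      case True thus ?thesis using v2 by (simp add: zero_le_mult_iff)
    next
      case False
      hence "de = 0" using 2 by (simp add: de_def)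
      thus ?thesis using v3 a0 by simp
    qed
  qed
  thus "(cmod (H$$(0,1)))\<^sup>2 \<le> Re (H$$(0,0)) * Re (H$$(1,1))" by (simp add: a_def b_def d_def al_def de_def)
qed




lemma CM1_carrier: "CM 1 g \<Longrightarrow> g \<in> carrier_mat 2 2" by (simp add: CM_def)

lemma CM1_psd: "CM 1 g \<Longrightarrow> qform 2 (cmat g - \<i> \<cdot>\<^sub>m Jflip 1 {}) v \<in> \<real> \<and> 0 \<le> Re (qform 2 (cmat g - \<i> \<cdot>\<^sub>m Jflip 1 {}) v)"
  unfolding CM_def psd_def by simp

lemma CM1_flip: assumes "CM 1 g"
  shows "qform 2 (cmat g - \<i> \<cdot>\<^sub>m Jflip 1 {0}) v \<in> \<real> \<and> 0 \<le> Re (qform 2 (cmat g - \<i> \<cdot>\<^sub>m Jflip 1 {0}) v)"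
proof -
  have gc: "g \<in> carrier_mat (2*1) (2*1)" using CM1_carrier[OF assms] by simp
  have e: "qform 2 (cmat g - \<i> \<cdot>\<^sub>m Jflip 1 {0}) v = cnj (qform 2 (cmat g - \<i> \<cdot>\<^sub>m Jflip 1 {}) (\<lambda>i. cnj (v i)))"
    unfolding qform2 using gc
    by (simp add: cmJ_index[of _ 1 _ g] Jflip_index J1entry_def algebra_simps)
  show ?thesis unfolding e using CM1_psd[OF assms, of "\<lambda>i. cnj (v i)"]
    by (auto simp: complex_is_Real_iff)
qed

lemma CM1_num: assumes "CM 1 g"
  shows "0 < g$$(0,0)" "0 < g$$(1,1)" "g$$(1,0) = g$$(0,1)" "1 \<le> g$$(0,0)*g$$(1,1) - (g$$(0,1))\<^sup>2"
proof -
  have gc: "g \<in> carrier_mat 2 2" using CM1_carrier[OF assms] .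
  have pd: "posdef_real 2 g" and ts: "transpose_mat g = g" using assms by (auto simp: CM_def)
  have "0 < (\<Sum>i<2. \<Sum>j<2. (\<lambda>i. if i = 0 then 1 else 0::real) i * g $$ (i,j) * (\<lambda>i. if i = 0 then 1 else 0::real) j)"
    using pd unfolding posdef_real_def by (elim conjE allE impE) auto
  thus a: "0 < g$$(0,0)" by (simp add: eval_nat_numeral lessThan_Suc)
  have "0 < (\<Sum>i<2. \<Sum>j<2. (\<lambda>i. if i = 1 then 1 else 0::real) i * g $$ (i,j) * (\<lambda>i. if i = 1 then 1 else 0::real) j)"
    using pd unfolding posdef_real_def by (elim conjE allE impE) (rule exI[of _ 1], auto)
  thus "0 < g$$(1,1)" by (simp add: eval_nat_numeral lessThan_Suc)
  have "transpose_mat g $$ (1,0) = g $$ (0,1)" using gc by simp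
  thus sy: "g$$(1,0) = g$$(0,1)" using ts by simp
  define A where "A = g$$(0,0)"
  define B where "B = g$$(0,1)"
  define D where "D = g$$(1,1)"
  have gc': "g \<in> carrier_mat (2*1) (2*1)" using gc by simp
  have "qform 2 (cmat g - \<i> \<cdot>\<^sub>m Jflip 1 {}) (\<lambda>i. if i = 0 then - (complex_of_real B + \<i>) else complex_of_real A)
      = complex_of_real (A * (A * D - B\<^sup>2 - 1))"
    unfolding qform2 using gc' sy
    by (simp add: cmJ_index[of _ 1 _ g] Jflip_index J1entry_def A_def B_def D_def algebra_simps complex_eq_iff power2_eq_square)
  hence "0 \<le> A * (A * D - B\<^sup>2 - 1)" using CM1_psd[OF assms, of "\<lambda>i. if i = 0 then - (complex_of_real B + \<i>) else complex_of_real A"]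
    by simp
  thus "1 \<le> g$$(0,0)*g$$(1,1) - (g$$(0,1))\<^sup>2" using a by (simp add: A_def B_def D_def zero_le_mult_iff)
qed

lemma final_arith:
  fixes a b d al de p q :: real
  assumes "0 < a" "0 < d" "1 \<le> a*d - b\<^sup>2" "0 \<le> al" "0 \<le> de" "p\<^sup>2 + q\<^sup>2 \<le> al * de"
  shows "2 \<le> a + d + al + de" "0 < (a + al) * (d + de) - ((b + p)\<^sup>2 + q\<^sup>2)"
proof -
  have "(2::real)\<^sup>2 \<le> 4 * (a * d)"
  proof -
    have "4 * (a * d) \<ge> 4" using assms(3) zero_le_power2[of b] by linarith
    thus ?thesis by simp
  qed
  also have "4 * (a * d) \<le> (a + d)\<^sup>2" using zero_le_power2[of "a - d"] by (simp add: power2_eq_square algebra_simps)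
  finally have sq: "(2::real)\<^sup>2 \<le> (a + d)\<^sup>2" .
  have "2 \<le> a + d" by (rule power2_le_imp_le[OF sq]) (use assms(1,2) in linarith)
  thus "2 \<le> a + d + al + de" using assms by simp
  have s1: "(a * de + d * al)\<^sup>2 \<ge> 4 * (a * d) * (al * de)"
    using zero_le_power2[of "a*de - d*al"] by (simp add: power2_eq_square algebra_simps)
  have "a * d \<ge> b\<^sup>2" using assms(3) by simp
  moreover have "al * de \<ge> p\<^sup>2" using assms(6) zero_le_power2[of q] by linarith
  ultimately have "(a * d) * (al * de) \<ge> b\<^sup>2 * p\<^sup>2" using assms(1,2) by (intro mult_mono) auto
  hence "(a * de + d * al)\<^sup>2 \<ge> (2 * b * p)\<^sup>2" using s1 by (simp add: power_mult_distrib)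
  hence sq2: "\<bar>2 * b * p\<bar>\<^sup>2 \<le> (a * de + d * al)\<^sup>2" by simp
  have nn: "0 \<le> a * de + d * al" using assms by simp
  have "\<bar>2 * b * p\<bar> \<le> a * de + d * al" by (rule power2_le_imp_le[OF sq2 nn])
  hence "2 * b * p \<le> a * de + d * al" by simp
  thus "0 < (a + al) * (d + de) - ((b + p)\<^sup>2 + q\<^sup>2)"
    using assms by (simp add: power2_eq_square algebra_simps)
qed




lemma Esel_mult_index: assumes M: "M \<in> carrier_mat m c" and i: "i < n" and j: "j < c" and mn: "m + s \<le> n"
  shows "(Esel n m s * M) $$ (i,j) = (if s \<le> i \<and> i - s < m then M $$ (i - s, j) else 0)"
proof -
  have "(Esel n m s * M) $$ (i,j) = (\<Sum>l<m. (if i = l + s then 1 else 0) * M $$ (l,j))"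
    using M i j by (simp add: scalar_prod_def atLeast0LessThan Esel_def)
  also have "\<dots> = (\<Sum>l<m. if l = i - s \<and> s \<le> i then M $$ (i - s, j) else 0)"
    by (intro sum.cong refl) auto
  also have "\<dots> = (if s \<le> i \<and> i - s < m then M $$ (i - s, j) else 0)"
    by (cases "s \<le> i") (auto simp: sum.delta)
  finally show ?thesis .
qed

lemma Nmat_carrier: "Nmat S \<gamma> \<in> carrier_mat 2 2"
  unfolding Nmat_def by (rule minus_carrier_mat) (auto intro!: carrier_matI)

lemma key:
  assumes g: "\<gamma> \<in> carrier_mat 6 6" and gs: "transpose_mat \<gamma> = \<gamma>"
    and cA: "CM 1 gA" and cB: "CM 1 gB" and cC: "CM 1 gC"
    and Qp: "psd 6 (cmat (\<gamma> - dsum3 gA gB gC))"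
    and S': "S' = (if fl then {1} else {})"
  shows "qform 2 (Nmat S' \<gamma> - cmat gA) x \<in> \<real> \<and> 0 \<le> Re (qform 2 (Nmat S' \<gamma> - cmat gA) x)"
proof -
  define S6 where "S6 = (if fl then {2::nat} else {})"
  define SC where "SC = (if fl then {0::nat} else {})"
  define P where "P = cmat \<gamma> - \<i> \<cdot>\<^sub>m Jflip 3 S6"
  define E1 where "E1 = Esel 6 2 0"
  define E2 where "E2 = Esel 6 4 2"
  have gAc: "gA \<in> carrier_mat 2 2" and gBc: "gB \<in> carrier_mat 2 2" and gCc: "gC \<in> carrier_mat 2 2"
    using cA cB cC by (auto simp: CM1_carrier)
  have Pc: "P \<in> carrier_mat 6 6" unfolding P_def by (rule minus_carrier_mat) (use Jflip_carrier[of 3 S6] in simp)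
  have E1c: "E1 \<in> carrier_mat 6 2" and E2c: "E2 \<in> carrier_mat 6 4" by (auto simp: E1_def E2_def)
  have b11: "adj E1 * P * E1 = cmat (blkA \<gamma>) - \<i> \<cdot>\<^sub>m Jflip 1 {}"
    unfolding E1_def using block_sel[OF Pc, of 2 0 2 0] blk11[OF g gs S6_def] by (simp add: P_def)
  have b12: "adj E1 * P * E2 = cmat (blkC \<gamma>)"
    unfolding E1_def E2_def using block_sel[OF Pc, of 2 0 4 2] blk12[OF g gs S6_def] by (simp add: P_def)
  have b21: "adj E2 * P * E1 = cmat (transpose_mat (blkC \<gamma>))"
    unfolding E1_def E2_def using block_sel[OF Pc, of 4 2 2 0] blk21[OF g gs S6_def] by (simp add: P_def)
  have b22: "adj E2 * P * E2 = cmat (blkB \<gamma>) - \<i> \<cdot>\<^sub>m Jflip 2 S'"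
    unfolding E2_def using block_sel[OF Pc, of 4 2 4 2] blk22[OF g gs S6_def S'] by (simp add: P_def)
  define B' where "B' = cmat (blkB \<gamma>) - \<i> \<cdot>\<^sub>m Jflip 2 S'"
  have B'c: "B' \<in> carrier_mat 4 4" unfolding B'_def by (rule minus_carrier_mat) (use Jflip_carrier[of 2 S'] in simp)
  have B'H: "adj B' = B'" unfolding B'_def by (rule B_herm[OF g gs S'])
  define X where "X = pinv 4 B'"
  note ph = pinv_herm[OF B'c B'H]
  have Xc: "X \<in> carrier_mat 4 4" and XH: "adj X = X" and XBX: "X * B' * X = X"
    using ph by (auto simp: X_def)
  define xv where "xv = colv 2 x"
  have xvc: "xv \<in> carrier_mat 2 1" unfolding xv_def by (rule colv_carrier)
  have XPX: "X * (adj E2 * P * E2) * X = X" using XBX by (simp add: b22 B'_def)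
  have PH: "adj (adj E2 * P * E1) = adj E1 * P * E2" by (simp add: b21 b12 C_adj[OF g gs])
  define yv where "yv = -(X * (adj E2 * P * E1) * xv)"
  define w where "w = E1 * xv + E2 * yv"
  have sq: "(adj w * P * w) $$ (0,0) =
     (adj xv * (adj E1 * P * E1 - (adj E1 * P * E2) * X * (adj E2 * P * E1)) * xv) $$ (0,0)"
    unfolding w_def yv_def by (rule schur_qf[OF Pc E1c E2c Xc xvc XH XPX PH])
  define M2 where "M2 = cmat (blkA \<gamma>) - \<i> \<cdot>\<^sub>m Jflip 1 {} - cmat (blkC \<gamma>) * X * cmat (transpose_mat (blkC \<gamma>))"
  have M2c: "M2 \<in> carrier_mat 2 2" unfolding M2_def by (rule minus_carrier_mat) (auto intro!: carrier_matI)
  have yvc: "yv \<in> carrier_mat 4 1" unfolding yv_def using Xc xvc b21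
    by (auto intro!: carrier_matI)
  have wc: "w \<in> carrier_mat 6 1" unfolding w_def using E1c E2c xvc yvc
    by (auto intro!: carrier_matI)
  define wf where "wf = (\<lambda>i. w $$ (i,0))"
  have q1: "qform 2 M2 x = qform 6 P wf"
  proof -
    have "qform 6 P wf = (adj w * P * w) $$ (0,0)"
      using qform_colv[OF Pc, of wf] colv_of[OF wc] by (simp add: wf_def)
    also have "\<dots> = (adj xv * M2 * xv) $$ (0,0)" unfolding sq b11 b12 b21 M2_def ..
    also have "\<dots> = qform 2 M2 x" using qform_colv[OF M2c, of x] by (simp add: xv_def)
    finally show ?thesis by simp
  qed
  define DA where "DA = cmat gA - \<i> \<cdot>\<^sub>m Jflip 1 {}"
  have DAc: "DA \<in> carrier_mat 2 2" unfolding DA_def by (rule minus_carrier_mat) (use Jflip_carrier[of 1 "{}"] in simp)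
  have Nm: "Nmat S' \<gamma> - cmat gA = M2 - DA"
  proof (rule eq_matI)
    fix i j assume i: "i < dim_row (M2 - DA)" and j: "j < dim_col (M2 - DA)"
    have ij: "i < 2" "j < 2" using i j DAc by auto
    show "(Nmat S' \<gamma> - cmat gA) $$ (i,j) = (M2 - DA) $$ (i,j)"
      using ij gAc Xc unfolding Nmat_def M2_def DA_def X_def B'_def by simp
  qed (use gAc DAc M2c Nmat_carrier in auto)
  have q2: "qform 2 (Nmat S' \<gamma> - cmat gA) x = qform 2 M2 x - qform 2 DA x"
    unfolding Nm by (rule qform_minus[OF M2c DAc])
  define Q where "Q = cmat (\<gamma> - dsum3 gA gB gC)"
  define D where "D = cmat (dsum3 gA gB gC) - \<i> \<cdot>\<^sub>m Jflip 3 S6"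
  have dsc: "dsum3 gA gB gC \<in> carrier_mat 6 6" by (rule dsum3_carrier[OF gAc gBc gCc])
  have Qc: "Q \<in> carrier_mat 6 6" using g dsc unfolding Q_def by (intro carrier_matI) auto
  have Dc: "D \<in> carrier_mat 6 6" unfolding D_def by (rule minus_carrier_mat) (use Jflip_carrier[of 3 S6] in simp)
  have PQD: "P = Q + D"
  proof (rule eq_matI)
    fix i j assume i: "i < dim_row (Q + D)" and j: "j < dim_col (Q + D)"
    have ij: "i < 6" "j < 6" using i j Dc by auto
    show "P $$ (i,j) = (Q + D) $$ (i,j)"
      using ij g dsc unfolding P_def Q_def D_def by simp
  qed (use Pc Qc Dc in auto)
  have q3: "qform 6 P wf = qform 6 Q wf + qform 6 D wf" unfolding PQD by (rule qform_add[OF Qc Dc])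
  have q4: "qform 6 D wf = qform 2 DA wf + qform 2 (cmat gB - \<i> \<cdot>\<^sub>m Jflip 1 {}) (\<lambda>i. wf (i+2))
     + qform 2 (cmat gC - \<i> \<cdot>\<^sub>m Jflip 1 SC) (\<lambda>i. wf (i+4))"
    unfolding D_def DA_def by (rule qform_D[OF gAc gBc gCc SC_def S6_def])
  have wx: "wf i = x i" if i: "i < 2" for i
  proof -
    have "wf i = (E1 * xv) $$ (i,0) + (E2 * yv) $$ (i,0)"
      unfolding wf_def w_def using i E1c E2c xvc yvc by simp
    also have "\<dots> = x i" unfolding E1_def E2_def
      using i Esel_mult_index[OF xvc, of i 6 0 0] Esel_mult_index[OF yvc, of i 6 0 2]
      by (simp add: xv_def colv_def)
    finally show ?thesis .
  qed
  have q5: "qform 2 DA wf = qform 2 DA x" by (rule qform_cong) (use wx in auto)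
  have tot: "qform 2 (Nmat S' \<gamma> - cmat gA) x = qform 6 Q wf + qform 2 (cmat gB - \<i> \<cdot>\<^sub>m Jflip 1 {}) (\<lambda>i. wf (i+2))
     + qform 2 (cmat gC - \<i> \<cdot>\<^sub>m Jflip 1 SC) (\<lambda>i. wf (i+4))"
    unfolding q2 q1 q3 q4 q5 by simp
  have r1: "qform 6 Q wf \<in> \<real> \<and> 0 \<le> Re (qform 6 Q wf)" using Qp unfolding psd_def Q_def by blast
  have r2: "qform 2 (cmat gB - \<i> \<cdot>\<^sub>m Jflip 1 {}) (\<lambda>i. wf (i+2)) \<in> \<real> \<and> 0 \<le> Re (qform 2 (cmat gB - \<i> \<cdot>\<^sub>m Jflip 1 {}) (\<lambda>i. wf (i+2)))"
    by (rule CM1_psd[OF cB])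
  have r3: "qform 2 (cmat gC - \<i> \<cdot>\<^sub>m Jflip 1 SC) (\<lambda>i. wf (i+4)) \<in> \<real> \<and> 0 \<le> Re (qform 2 (cmat gC - \<i> \<cdot>\<^sub>m Jflip 1 SC) (\<lambda>i. wf (i+4)))"
    using CM1_psd[OF cC] CM1_flip[OF cC] by (cases fl) (auto simp: SC_def)
  show ?thesis unfolding tot using r1 r2 r3 by auto
qed




lemma final_N:
  assumes N: "N \<in> carrier_mat 2 2" and cg: "CM 1 g"
    and Q: "\<And>x. qform 2 (N - cmat g) x \<in> \<real> \<and> 0 \<le> Re (qform 2 (N - cmat g) x)"
  shows "mtrace N \<in> \<real> \<and> 2 \<le> Re (mtrace N) \<and> det N \<in> \<real> \<and> 0 < Re (det N)"
proof -
  define H where "H = N - cmat g"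
  note pf = psd2_facts[OF Q[folded H_def]]
  have gc: "g \<in> carrier_mat 2 2" by (rule CM1_carrier[OF cg])
  note gn = CM1_num[OF cg]
  have hN: "N $$ (i,j) = H $$ (i,j) + complex_of_real (g $$ (i,j))" if "i < 2" "j < 2" for i j
    using that N gc by (simp add: H_def)
  define al where "al = Re (H$$(0,0))"
  define de where "de = Re (H$$(1,1))"
  define z where "z = H$$(0,1)"
  have h00: "H$$(0,0) = complex_of_real al" using pf(1) by (simp add: al_def complex_is_Real_iff complex_eq_iff)
  have h11: "H$$(1,1) = complex_of_real de" using pf(2) by (simp add: de_def complex_is_Real_iff complex_eq_iff)
  have h10: "H$$(1,0) = cnj z" using pf(5) by (simp add: z_def)
  have h11s: "H$$(Suc 0, Suc 0) = complex_of_real de" using h11 by (simp only: One_nat_def)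
  have h10s: "H$$(Suc 0, 0) = cnj (H$$(0, Suc 0))" using h10 by (simp only: One_nat_def z_def)
  define a where "a = g$$(0,0)"
  define b where "b = g$$(0,1)"
  define d where "d = g$$(1,1)"
  have tr: "mtrace N = complex_of_real (a + d + al + de)"
  proof -
    have s2: "{..<2::nat} = {0,1}" by auto
    have h11': "H$$(Suc 0, Suc 0) = complex_of_real de" using h11 by (simp only: One_nat_def)
    have d': "g$$(Suc 0, Suc 0) = d" by (simp only: d_def One_nat_def)
    show ?thesis unfolding mtrace_def using N by (simp add: s2 hN h00 h11 h11' d' a_def[symmetric] d_def[symmetric])
  qed
  have "det N = N$$(0,0) * N$$(1,1) - N$$(0,1) * N$$(1,0)" by (rule det2[OF N])
  also have "\<dots> = (complex_of_real (al + a)) * complex_of_real (de + d) - (z + complex_of_real b) * (cnj z + complex_of_real b)"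
    using gn(3) by (simp add: hN h00 h11 h10 h11s h10s a_def b_def d_def z_def)
  also have "\<dots> = complex_of_real ((a + al) * (d + de) - ((b + Re z)\<^sup>2 + (Im z)\<^sup>2))"
    by (simp add: complex_eq_iff power2_eq_square algebra_simps)
  finally have dt: "det N = complex_of_real ((a + al) * (d + de) - ((b + Re z)\<^sup>2 + (Im z)\<^sup>2))" .
  have pq: "(Re z)\<^sup>2 + (Im z)\<^sup>2 \<le> al * de" using pf(6) by (simp add: z_def al_def de_def cmod_power2)
  have fa: "2 \<le> a + d + al + de" "0 < (a + al) * (d + de) - ((b + Re z)\<^sup>2 + (Im z)\<^sup>2)"
    using final_arith[of a d b al de "Re z" "Im z"] gn pf(3,4) pq by (auto simp: a_def b_def d_def al_def de_def)
  show ?thesis unfolding tr dt using fa by simp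
qed

theorem mainTheorem8:
  fixes \<gamma> :: "real mat"
  assumes "PPT3 \<gamma>"
    and "fully_separable3 \<gamma>"
  shows "mtrace (Nmat {} \<gamma>) \<in> \<real> \<and> 2 \<le> Re (mtrace (Nmat {} \<gamma>))
       \<and> mtrace (Nmat {1} \<gamma>) \<in> \<real> \<and> 2 \<le> Re (mtrace (Nmat {1} \<gamma>))
       \<and> det (Nmat {} \<gamma>) \<in> \<real> \<and> 0 < Re (det (Nmat {} \<gamma>))
       \<and> det (Nmat {1} \<gamma>) \<in> \<real> \<and> 0 < Re (det (Nmat {1} \<gamma>))"
proof -
  have cm: "CM 3 \<gamma>" using assms(1) by (simp add: PPT3_def)
  have g: "\<gamma> \<in> carrier_mat 6 6" and gs: "transpose_mat \<gamma> = \<gamma>" using cm by (auto simp: CM_def)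
  obtain gA gB gC where cA: "CM 1 gA" and cB: "CM 1 gB" and cC: "CM 1 gC"
    and Qp: "psd 6 (cmat (\<gamma> - dsum3 gA gB gC))"
    using assms(2) unfolding fully_separable3_def by blast
  have k0: "\<And>x. qform 2 (Nmat {} \<gamma> - cmat gA) x \<in> \<real> \<and> 0 \<le> Re (qform 2 (Nmat {} \<gamma> - cmat gA) x)"
    using key[OF g gs cA cB cC Qp, of "{}" False] by simp
  have k1: "\<And>x. qform 2 (Nmat {1} \<gamma> - cmat gA) x \<in> \<real> \<and> 0 \<le> Re (qform 2 (Nmat {1} \<gamma> - cmat gA) x)"
    using key[OF g gs cA cB cC Qp, of "{1}" True] by simp
  show ?thesis using final_N[OF Nmat_carrier cA k0] final_N[OF Nmat_carrier cA k1] by blast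
qed


end
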